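(* Let $n\in\mathbb N$ and $0<\alpha<\beta$. Then there exists $c=c(n,\alpha,\beta)>0$ such that $|P_{n,j,m}(\lambda)|\le c\beta^m$ whenever $m\in\mathbb Z_+$, $1\le j\le n$ and $\lambda\in\mathbb C^n$ satisfies $\max_{1\le r\le n}|\lambda_r|\le\alpha$.
   Context: For $\lambda=(\lambda_1,\dots,\lambda_n)\in\mathbb C^n$, $M_n(\lambda)$ is the Vandermonde matrix $(\lambda_j^{r-1})_{j,r=1}^n$. For $1\le j\le n$ and $m\in\mathbb Z_+$, $M_{n,j,m}(\lambda)$ is the matrix obtained from $M_n(\lambda)$ by replacing its $j$-th column $(\lambda_1^{j-1},\dots,\lambda_n^{j-1})^T$ by $(\lambda_1^m,\dots,\lambda_n^m)^T$. The polynomial $\det M_n(\lambda)=\prod_{1\le j<r\le n}(\lambda_r-\lambda_j)$ divides $\det M_{n,j,m}(\lambda)$ in $\mathbb C[\lambda_1,\dots,\lambda_n]$, and $P_{n,j,m}\in\mathbb C[\lambda_1,\dots,\lambda_n]$ denotes the quotient $\det M_{n,j,m}(\lambda)/\det M_n(\lambda)$. $\mathbb Z_+=\{0,1,2,\dots\}$. *)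

theory Defs
  imports Complex_Main "Jordan_Normal_Form.Determinant"
begin

text \<open>Points lambda of C^n are represented as functions nat => complex; only the
  coordinates 0..n-1 (i.e. lambda_1..lambda_n of the paper, shifted by one) matter.\<close>

inductive poly_fun :: "nat \<Rightarrow> ((nat \<Rightarrow> complex) \<Rightarrow> complex) \<Rightarrow> bool" for n where
  const: "poly_fun n (\<lambda>_. c)"
| var: "i < n \<Longrightarrow> poly_fun n (\<lambda>x. x i)"
| add: "poly_fun n f \<Longrightarrow> poly_fun n g \<Longrightarrow> poly_fun n (\<lambda>x. f x + g x)"
| mult: "poly_fun n f \<Longrightarrow> poly_fun n g \<Longrightarrow> poly_fun n (\<lambda>x. f x * g x)"

definition vandermonde :: "nat \<Rightarrow> (nat \<Rightarrow> complex) \<Rightarrow> complex mat" where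
  "vandermonde n x = mat n n (\<lambda>(r, c). x r ^ c)"

text \<open>M_{n,j,m}(lambda): the j-th column (1-based j) replaced by (lambda_r ^ m)_r.\<close>
definition vandermonde_repl :: "nat \<Rightarrow> nat \<Rightarrow> nat \<Rightarrow> (nat \<Rightarrow> complex) \<Rightarrow> complex mat" where
  "vandermonde_repl n j m x = mat n n (\<lambda>(r, c). if c = j - 1 then x r ^ m else x r ^ c)"

text \<open>P_{n,j,m}: the polynomial quotient det M_{n,j,m} / det M_n, as a polynomial function.\<close>
definition P :: "nat \<Rightarrow> nat \<Rightarrow> nat \<Rightarrow> (nat \<Rightarrow> complex) \<Rightarrow> complex" where
  "P n j m = (THE f. poly_fun n f \<and>
      (\<forall>x. f x * det (vandermonde n x) = det (vandermonde_repl n j m x)))"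

end

theory Submission
  imports Defs
begin

fun hh :: "nat \<Rightarrow> nat \<Rightarrow> (nat \<Rightarrow> complex) \<Rightarrow> complex" where
  "hh 0 d x = (if d = 0 then 1 else 0)"
| "hh (Suc k) 0 x = 1"
| "hh (Suc k) (Suc d) x = hh k (Suc d) x + x k * hh (Suc k) d x"

lemma hh_0[simp]: "hh k 0 x = 1"
  by (cases k) auto

lemma hh_upd: "k \<le> k' \<Longrightarrow> hh k d (x(k' := y)) = hh k d x"
proof (induction k d x rule: hh.induct)
  case (3 k d x) then show ?case by simp
qed auto

lemma hh_diff:
  "hh (Suc k) (Suc d) (x(k := y)) - hh (Suc k) (Suc d) x
     = (y - x k) * hh (Suc (Suc k)) d (x(Suc k := y))"
proof (induction d)
  case 0
  have a: "hh k (Suc 0) (x(k := y)) = hh k (Suc 0) x" by (rule hh_upd) simp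
  show ?case
    apply (subst hh.simps(3))
    apply (subst a)
    by simp
next
  case (Suc d)
  have e1: "hh (Suc k) (Suc (Suc d)) (x(k := y)) = hh k (Suc (Suc d)) x + y * hh (Suc k) (Suc d) (x(k := y))"
    by (simp add: hh_upd)
  have e2: "hh (Suc k) (Suc (Suc d)) x = hh k (Suc (Suc d)) x + x k * hh (Suc k) (Suc d) x"
    by simp
  have e3: "hh (Suc (Suc k)) (Suc d) (x(Suc k := y)) = hh (Suc k) (Suc d) x + y * hh (Suc (Suc k)) d (x(Suc k := y))"
    by (simp add: hh_upd)
  have "hh (Suc k) (Suc (Suc d)) (x(k := y)) - hh (Suc k) (Suc (Suc d)) x
      = y * (hh (Suc k) (Suc d) (x(k := y)) - hh (Suc k) (Suc d) x) + (y - x k) * hh (Suc k) (Suc d) x"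
    unfolding e1 e2 by (simp add: algebra_simps)
  also have "\<dots> = (y - x k) * hh (Suc (Suc k)) (Suc d) (x(Suc k := y))"
    unfolding Suc e3 by (simp add: algebra_simps)
  finally show ?case .
qed

fun W :: "nat \<Rightarrow> (nat \<Rightarrow> complex) \<Rightarrow> complex poly" where
  "W 0 x = 1"
| "W (Suc i) x = [:- x i, 1:] * W i x"

lemma poly_W: "poly (W k x) y = (\<Prod>r<k. y - x r)"
  by (induction k) (auto simp: algebra_simps)

lemma degree_W0: "W k x \<noteq> 0 \<and> degree (W k x) = k"
  by (induction k) (simp_all add: degree_mult_eq del: mult_pCons_left)

lemma degree_W: "degree (W k x) = k"
  using degree_W0 by blast

definition R :: "nat \<Rightarrow> nat \<Rightarrow> (nat \<Rightarrow> complex) \<Rightarrow> complex poly" where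
  "R k m x = (\<Sum>i<k. smult (if i \<le> m then hh (Suc i) (m - i) x else 0) (W i x))"

lemma hh1: "hh (Suc 0) d z = z 0 ^ d"
  by (induction d) auto

lemma newton:
  "poly (R k m x) y = y ^ m - (if k \<le> m then hh (Suc k) (m - k) (x(k := y)) else 0) * poly (W k x) y"
proof (induction k)
  case 0
  then show ?case by (simp add: R_def hh1)
next
  case (Suc k)
  have RS: "poly (R (Suc k) m x) y = poly (R k m x) y + (if k \<le> m then hh (Suc k) (m - k) x else 0) * poly (W k x) y"
    by (simp add: R_def)
  have WS: "poly (W (Suc k) x) y = (y - x k) * poly (W k x) y" by (simp add: algebra_simps)
  consider "k < m" | "k = m" | "m < k" by linarith
  then show ?case
  proof cases
    case 1
    then obtain d where d: "m - k = Suc d" "m - Suc k = d" by (metis Suc_diff_Suc)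
    have aux: "z - a * w + b * w = z - c * ((u::complex) * w)" if "a - b = u * c" for z a b c w u
    proof -
      have "a = u * c + b" using that by (simp add: diff_eq_eq)
      then show ?thesis by (simp add: algebra_simps)
    qed
    show ?thesis unfolding RS WS Suc d using 1 hh_diff[of k d x y]
      by (simp add: aux)
  next
    case 2
    then show ?thesis unfolding RS WS Suc by simp
  next
    case 3
    then show ?thesis unfolding RS WS Suc by simp
  qed
qed

lemma R_root: "s < n \<Longrightarrow> poly (R n m x) (x s) = x s ^ m"
  by (simp add: newton poly_W) (metis lessThan_iff)

lemma coeff_R_high: "n \<le> c \<Longrightarrow> coeff (R n m x) c = 0"
  unfolding R_def coeff_sum using degree_W
  by (intro sum.neutral) (auto intro!: coeff_eq_0 simp: degree_W)

lemma poly_sum_below: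
  fixes p :: "complex poly"
  assumes "\<And>c. n \<le> c \<Longrightarrow> coeff p c = 0"
  shows "poly p y = (\<Sum>c<n. coeff p c * y ^ c)"
proof -
  have "poly p y = (\<Sum>c\<le>degree p. coeff p c * y ^ c)" by (rule poly_altdef)
  also have "\<dots> = (\<Sum>c<max n (Suc (degree p)). coeff p c * y ^ c)"
    by (intro sum.mono_neutral_left) (auto simp: coeff_eq_0)
  also have "\<dots> = (\<Sum>c<n. coeff p c * y ^ c)"
    using assms by (intro sum.mono_neutral_right) auto
  finally show ?thesis .
qed

lemma det_repl:
  assumes "1 \<le> j" "j \<le> n"
  shows "det (vandermonde_repl n j m x) = coeff (R n m x) (j - 1) * det (vandermonde n x)"
proof -
  define a where "a = vec n (\<lambda>c. coeff (R n m x) c)"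
  define V where "V = vandermonde n x"
  have V: "V \<in> carrier_mat n n" by (simp add: V_def vandermonde_def)
  have a: "a \<in> carrier_vec n" by (simp add: a_def)
  have Va: "(V *\<^sub>v a) $ r = x r ^ m" if "r < n" for r
  proof -
    have "(V *\<^sub>v a) $ r = (\<Sum>c<n. x r ^ c * coeff (R n m x) c)"
      using that by (simp add: V_def vandermonde_def a_def mult_mat_vec_def scalar_prod_def lessThan_atLeast0)
    also have "\<dots> = poly (R n m x) (x r)"
      by (subst poly_sum_below[OF coeff_R_high]) (auto simp: mult.commute)
    also have "\<dots> = x r ^ m" using R_root that by blast
    finally show ?thesis .
  qed
  have eq: "vandermonde_repl n j m x = replace_col V (V *\<^sub>v a) (j - 1)"
  proof -
    have Ve: "V $$ (i, c) = x i ^ c" if "i < n" "c < n" for i c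
      using that by (simp add: V_def vandermonde_def)
    have dV: "dim_row V = n" "dim_col V = n" using V by auto
    show ?thesis
      by (rule eq_matI) (auto simp: vandermonde_repl_def replace_col_def dV Ve Va simp del: index_mult_mat_vec)
  qed
  have "det (replace_col V (V *\<^sub>v a) (j - 1)) = a $ (j - 1) * det V"
    using assms by (intro cramer_lemma_mat[OF V a]) auto
  then show ?thesis using assms unfolding eq by (simp add: a_def V_def)
qed

lemma pf_eq: "poly_fun n f \<Longrightarrow> (\<And>x. f x = g x) \<Longrightarrow> poly_fun n g"
proof -
  assume "poly_fun n f" "\<And>x. f x = g x"
  moreover have "f = g" using calculation(2) by blast
  ultimately show ?thesis by simp
qed

lemma pf_const: "poly_fun n (\<lambda>_. c)" by (rule poly_fun.const)

lemma pf_add: "poly_fun n f \<Longrightarrow> poly_fun n g \<Longrightarrow> poly_fun n (\<lambda>x. f x + g x)"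
  by (rule poly_fun.add)

lemma pf_mult: "poly_fun n f \<Longrightarrow> poly_fun n g \<Longrightarrow> poly_fun n (\<lambda>x. f x * g x)"
  by (rule poly_fun.mult)

lemma pf_var: "i < n \<Longrightarrow> poly_fun n (\<lambda>x. x i)"
  by (rule poly_fun.var)

lemma pf_minus: "poly_fun n f \<Longrightarrow> poly_fun n g \<Longrightarrow> poly_fun n (\<lambda>x. f x - g x)"
proof -
  assume a: "poly_fun n f" "poly_fun n g"
  have "poly_fun n (\<lambda>x. f x + (-1) * g x)" using a by (intro pf_add pf_mult pf_const)
  then show ?thesis by (rule pf_eq) simp
qed

lemma pf_sum: "finite I \<Longrightarrow> (\<And>i. i \<in> I \<Longrightarrow> poly_fun n (f i)) \<Longrightarrow> poly_fun n (\<lambda>x. \<Sum>i\<in>I. f i x)"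
proof (induction I rule: finite_induct)
  case empty
  then show ?case by (simp add: pf_const)
next
  case (insert a F)
  have "poly_fun n (\<lambda>x. f a x + (\<Sum>i\<in>F. f i x))"
    using insert by (intro pf_add) (auto intro: pf_eq)
  then show ?case using insert by simp
qed

lemma pf_hh: "k \<le> n \<Longrightarrow> poly_fun n (hh k d)"
proof (induction k arbitrary: d)
  case 0
  then show ?case using pf_const[of n "if d = 0 then 1 else 0"] by (auto intro: pf_eq)
next
  case (Suc k)
  have ih: "\<And>d. poly_fun n (hh k d)" using Suc by auto
  show ?case
  proof (induction d)
    case 0
    then show ?case using pf_const[of n 1] by (auto intro: pf_eq)
  next
    case (Suc d)
    have "poly_fun n (\<lambda>x. hh k (Suc d) x + x k * hh (Suc k) d x)"
      using Suc.IH ih \<open>Suc k \<le> n\<close> by (intro pf_add pf_mult pf_var) (auto intro: pf_eq)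
    then show ?case by (auto intro: pf_eq)
  qed
qed

lemma coeff_W_Suc: "coeff (W (Suc k) x) c = - x k * coeff (W k x) c + (case c of 0 \<Rightarrow> 0 | Suc c' \<Rightarrow> coeff (W k x) c')"
  by (simp add: coeff_pCons split: nat.split)

lemma pf_W: "k \<le> n \<Longrightarrow> poly_fun n (\<lambda>x. coeff (W k x) c)"
proof (induction k arbitrary: c)
  case 0
  then show ?case using pf_const[of n "if c = 0 then 1 else 0"] by (auto intro: pf_eq)
next
  case (Suc k)
  have "poly_fun n (\<lambda>x. ((-1) * x k) * coeff (W k x) c)"
    using Suc by (intro pf_mult pf_var pf_const) auto
  then have a: "poly_fun n (\<lambda>x. - x k * coeff (W k x) c)" by (rule pf_eq) simp
  have b: "poly_fun n (\<lambda>x. case c of 0 \<Rightarrow> 0 | Suc c' \<Rightarrow> coeff (W k x) c')"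
    using Suc by (cases c) (auto intro: pf_const)
  show ?case unfolding coeff_W_Suc by (rule pf_add[OF a b])
qed

lemma pf_hhR: "i < n \<Longrightarrow> poly_fun n (\<lambda>x. if i \<le> m then hh (Suc i) (m - i) x else 0)"
  by (cases "i \<le> m") (auto intro: pf_const simp: pf_hh)

lemma pf_R: "poly_fun n (\<lambda>x. coeff (R n m x) c)"
  unfolding R_def coeff_sum coeff_smult
  by (intro pf_sum pf_mult pf_W pf_hhR) auto

lemma det_V_nz:
  assumes inj: "inj_on x {..<n}"
  shows "det (vandermonde n x) \<noteq> 0"
proof
  assume "det (vandermonde n x) = 0"
  then obtain v where v: "v \<in> carrier_vec n" "v \<noteq> 0\<^sub>v n" "vandermonde n x *\<^sub>v v = 0\<^sub>v n"
    using det_0_iff_vec_prod_zero_field[of "vandermonde n x" n] by (auto simp: vandermonde_def)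
  define p where "p = (\<Sum>c<n. monom (v $ c) c)"
  have cp: "coeff p c = (if c < n then v $ c else 0)" for c
    unfolding p_def coeff_sum by (auto simp: coeff_monom)
  have pp: "poly p y = (\<Sum>c<n. v $ c * y ^ c)" for y
    unfolding p_def poly_sum by (simp add: poly_monom)
  have roots: "poly p (x r) = 0" if "r < n" for r
  proof -
    have "(vandermonde n x *\<^sub>v v) $ r = 0" using v that by simp
    then have "(\<Sum>c<n. x r ^ c * v $ c) = 0"
      using v that by (simp add: vandermonde_def mult_mat_vec_def scalar_prod_def lessThan_atLeast0)
    then show ?thesis unfolding pp by (simp add: mult.commute)
  qed
  show False
  proof (cases "p = 0")
    case True
    then have "v $ c = 0" if "c < n" for c using cp[of c] that by simp
    then have "v = 0\<^sub>v n" using v(1) by (intro eq_vecI) auto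
    then show False using v(2) by simp
  next
    case False
    then have n0: "n \<ge> 1" using cp by (cases n) (auto simp: poly_eq_iff)
    have dp: "degree p \<le> n - 1" by (rule degree_le) (auto simp: cp)
    have "n = card (x ` {..<n})" using card_image[OF inj] by simp
    also have "\<dots> \<le> card {y. poly p y = 0}"
      by (intro card_mono poly_roots_finite False) (auto simp: roots)
    also have "\<dots> \<le> degree p" by (rule card_poly_roots_bound[OF False])
    finally show False using dp n0 by linarith
  qed
qed

lemma pf_cont: "poly_fun n f \<Longrightarrow> isCont (\<lambda>t::complex. f (\<lambda>r. x r + t * c r)) tz"
  by (induction rule: poly_fun.induct) (auto intro!: continuous_intros)

lemma pf_uniq:
  assumes "poly_fun n f" "poly_fun n g"
    and eq: "\<And>x. f x * det (vandermonde n x) = g x * det (vandermonde n x)"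
  shows "f = g"
proof
  fix x :: "nat \<Rightarrow> complex"
  define h where "h = (\<lambda>x. f x - g x)"
  have ph: "poly_fun n h" unfolding h_def using assms by (intro pf_minus)
  have h0: "h z = 0" if "inj_on z {..<n}" for z
    using eq[of z] det_V_nz[OF that] by (simp add: h_def algebra_simps)
  define y where "y = (\<lambda>(t::complex) r. x r + t * of_nat r)"
  define B where "B = {t. \<exists>r<n. \<exists>s<n. r \<noteq> s \<and> y t r = y t s}"
  have "B \<subseteq> (\<lambda>(r,s). (x s - x r) / (of_nat r - of_nat s)) ` ({..<n} \<times> {..<n})"
  proof
    fix t assume "t \<in> B"
    then obtain r s where rs: "r < n" "s < n" "r \<noteq> s" "x r + t * of_nat r = x s + t * of_nat s"
      by (auto simp: B_def y_def)
    have nz: "(of_nat r - of_nat s :: complex) \<noteq> 0" using rs(3) by simp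
    have "t * (of_nat r - of_nat s) = x s - x r" using rs(4) by (simp add: algebra_simps)
    then have "t = (x s - x r) / (of_nat r - of_nat s)" using nz by (simp add: field_simps)
    then show "t \<in> (\<lambda>(r,s). (x s - x r) / (of_nat r - of_nat s)) ` ({..<n} \<times> {..<n})"
      using rs by force
  qed
  then have fB: "finite B" by (rule finite_subset) auto
  have ev: "eventually (\<lambda>t. t \<notin> B) (at (0::complex))"
  proof -
    have "\<forall>\<^sub>F t in at (0::complex). \<forall>b\<in>B. t \<noteq> b"
    proof (rule eventually_ball_finite[OF fB], rule ballI)
      fix b assume "b \<in> B"
      show "\<forall>\<^sub>F t in at (0::complex). t \<noteq> b"
      proof (cases "b = 0")
        case True
        then show ?thesis unfolding eventually_at_filter by simp
      next
        case False
        then have "\<forall>\<^sub>F t in nhds (0::complex). t \<noteq> b" by (intro t1_space_nhds) auto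
        then show ?thesis unfolding eventually_at_filter by (auto elim: eventually_mono)
      qed
    qed
    then show ?thesis by (auto elim: eventually_mono)
  qed
  have ev2: "eventually (\<lambda>t. h (y t) = 0) (at (0::complex))"
  proof (rule eventually_mono[OF ev])
    fix t assume "t \<notin> B"
    then have "inj_on (y t) {..<n}" by (auto simp: inj_on_def B_def)
    then show "h (y t) = 0" by (rule h0)
  qed
  have c: "((\<lambda>t. h (y t)) \<longlongrightarrow> h (y 0)) (at 0)"
    using pf_cont[OF ph, where x=x and c="\<lambda>r. of_nat r" and tz=0] unfolding isCont_def y_def by simp
  have c2: "((\<lambda>t. h (y t)) \<longlongrightarrow> 0) (at 0)" by (rule tendsto_eventually[OF ev2])
  have "h (y 0) = 0" by (rule tendsto_unique[OF _ c c2]) simp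
  moreover have "y 0 = x" by (simp add: y_def)
  ultimately show "f x = g x" by (simp add: h_def)
qed

lemma hh_bound:
  assumes "0 \<le> a" "\<forall>r<k. cmod (x r) \<le> a"
  shows "cmod (hh k d x) \<le> (real d + 1) ^ k * a ^ d"
  using assms(2)
proof (induction k arbitrary: d)
  case 0
  then show ?case using assms(1) by simp
next
  case (Suc k)
  have ih: "\<And>d. cmod (hh k d x) \<le> (real d + 1) ^ k * a ^ d" using Suc by auto
  have xk: "cmod (x k) \<le> a" using Suc.prems by auto
  show ?case
  proof (induction d)
    case 0
    then show ?case by simp
  next
    case (Suc d)
    have "cmod (hh (Suc k) (Suc d) x) \<le> cmod (hh k (Suc d) x) + cmod (x k) * cmod (hh (Suc k) d x)"
      by (simp add: norm_triangle_ineq[THEN order_trans] norm_mult)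
    also have "\<dots> \<le> (real (Suc d) + 1) ^ k * a ^ Suc d + a * ((real d + 1) ^ Suc k * a ^ d)"
      using ih[of "Suc d"] Suc.IH xk assms(1)
      by (intro add_mono mult_mono) auto
    also have "\<dots> \<le> (real (Suc d) + 1) ^ Suc k * a ^ Suc d"
    proof -
      have "(real d + 1) ^ Suc k \<le> (real d + 1) * (real d + 2) ^ k"
        by (simp, intro mult_left_mono power_mono) auto
      then have "a ^ Suc d * (real d + 1) ^ Suc k \<le> a ^ Suc d * ((real d + 1) * (real d + 2) ^ k)"
        using assms(1) by (intro mult_left_mono) auto
      then show ?thesis by (simp add: algebra_simps)
    qed
    finally show ?case .
  qed
qed

lemma W_bound:
  assumes "0 \<le> a" "\<forall>r<k. cmod (x r) \<le> a"
  shows "cmod (coeff (W k x) c) \<le> (1 + a) ^ k"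
  using assms(2)
proof (induction k arbitrary: c)
  case 0
  then show ?case by simp
next
  case (Suc k)
  have ih: "\<And>c. cmod (coeff (W k x) c) \<le> (1 + a) ^ k" using Suc by auto
  have xk: "cmod (x k) \<le> a" using Suc.prems by auto
  have b: "cmod (case c of 0 \<Rightarrow> 0 | Suc c' \<Rightarrow> coeff (W k x) c') \<le> (1 + a) ^ k"
    using ih assms(1) by (cases c) auto
  have "cmod (coeff (W (Suc k) x) c) \<le> cmod (x k) * cmod (coeff (W k x) c) + (1 + a) ^ k"
    unfolding coeff_W_Suc using b
    by (metis (no_types, lifting) add_mono norm_minus_cancel norm_mult norm_triangle_ineq order_trans order.refl mult_minus_left)
  also have "\<dots> \<le> a * (1 + a) ^ k + (1 + a) ^ k"
    using xk ih[of c] assms(1) by (intro add_mono mult_mono) auto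
  finally show ?case by (simp add: algebra_simps)
qed

lemma R_bound:
  assumes a: "0 < a" and x: "\<forall>r<n. cmod (x r) \<le> a"
  shows "cmod (coeff (R n m x) c) \<le> real n * ((real m + 1) ^ n * a ^ m * ((1 + a) / a) ^ n)"
proof -
  define K where "K = (real m + 1) ^ n * a ^ m * ((1 + a) / a) ^ n"
  have tm: "cmod ((if i \<le> m then hh (Suc i) (m - i) x else 0) * coeff (W i x) c) \<le> K"
    if i: "i < n" for i
  proof (cases "i \<le> m")
    case False
    have "0 \<le> K" using a by (simp add: K_def)
    then show ?thesis using False by simp
  next
    case True
    have h: "cmod (hh (Suc i) (m - i) x) \<le> (real (m - i) + 1) ^ Suc i * a ^ (m - i)"
      using x i a by (intro hh_bound) auto
    have w: "cmod (coeff (W i x) c) \<le> (1 + a) ^ i"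
      using x i a by (intro W_bound) auto
    have p1: "(real (m - i) + 1) ^ Suc i \<le> (real m + 1) ^ Suc i"
      by (intro power_mono) auto
    have p2: "(real m + 1) ^ Suc i \<le> (real m + 1) ^ n"
      using i by (intro power_increasing) auto
    have q1: "((1 + a) / a) ^ i \<le> ((1 + a) / a) ^ n"
      using i a by (intro power_increasing) (auto simp: field_simps)
    have am: "a ^ m = a ^ (m - i) * a ^ i"
      using True by (simp flip: power_add)
    have q: "a ^ (m - i) * (1 + a) ^ i = a ^ m * ((1 + a) / a) ^ i"
      using a unfolding am by (simp add: power_divide field_simps)
    have "cmod ((if i \<le> m then hh (Suc i) (m - i) x else 0) * coeff (W i x) c)
        = cmod (hh (Suc i) (m - i) x) * cmod (coeff (W i x) c)" using True by (simp add: norm_mult)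
    also have "\<dots> \<le> ((real (m - i) + 1) ^ Suc i * a ^ (m - i)) * (1 + a) ^ i"
      by (rule mult_mono[OF h w]) (use a in auto)
    also have "\<dots> \<le> (real m + 1) ^ n * (a ^ (m - i) * (1 + a) ^ i)"
      using p1 p2 a by (simp only: mult.assoc[symmetric]) (intro mult_right_mono, auto)
    also have "\<dots> \<le> (real m + 1) ^ n * (a ^ m * ((1 + a) / a) ^ n)"
      unfolding q using q1 a by (intro mult_left_mono) auto
    finally show ?thesis by (simp add: K_def mult.assoc)
  qed
  have "cmod (coeff (R n m x) c) \<le> (\<Sum>i<n. cmod ((if i \<le> m then hh (Suc i) (m - i) x else 0) * coeff (W i x) c))"
    unfolding R_def coeff_sum coeff_smult by (rule norm_sum)
  also have "\<dots> \<le> real n * K"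
    using sum_bounded_above[of "{..<n}" _ K] tm by auto
  finally show ?thesis by (simp add: K_def)
qed

lemma poly_geom_bound:
  assumes "0 < a" "a < b"
  shows "\<exists>B>0. \<forall>m. (real m + 1) ^ n * a ^ m \<le> B * b ^ m"
proof -
  define q where "q = a / b"
  have q: "0 < q" "q < 1" using assms by (auto simp: q_def)
  have lim: "(\<lambda>m. (real m + 1) ^ n * q ^ m) \<longlonglongrightarrow> 0"
  proof (cases "n = 0")
    case True
    then show ?thesis using q by (simp add: LIMSEQ_power_zero)
  next
    case False
    define s where "s = root n q"
    have s: "0 < s" "s < 1" using q False by (auto simp: s_def)
    have sn: "s ^ n = q" using q False by (simp add: s_def)
    have "(\<lambda>m. real m * s ^ m) \<longlonglongrightarrow> 0"
      using powser_times_n_limit_0[of s] s by simp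
    moreover have "(\<lambda>m. s ^ m) \<longlonglongrightarrow> 0" using s by (simp add: LIMSEQ_power_zero)
    ultimately have "(\<lambda>m. real m * s ^ m + s ^ m) \<longlonglongrightarrow> 0 + 0" by (rule tendsto_add)
    then have "(\<lambda>m. real m * s ^ m + s ^ m) \<longlonglongrightarrow> 0" by simp
    then have "(\<lambda>m. (real m * s ^ m + s ^ m) ^ n) \<longlonglongrightarrow> 0 ^ n" by (rule tendsto_power)
    moreover have "(real m * s ^ m + s ^ m) ^ n = (real m + 1) ^ n * q ^ m" for m
    proof -
      have "real m * s ^ m + s ^ m = (real m + 1) * s ^ m" by (simp add: algebra_simps)
      moreover have "(s ^ m) ^ n = q ^ m" by (simp flip: sn power_mult add: mult.commute)
      ultimately show ?thesis by (simp add: power_mult_distrib)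
    qed
    ultimately show ?thesis using False by (simp add: zero_power)
  qed
  then have "Bseq (\<lambda>m. (real m + 1) ^ n * q ^ m)" by (intro convergent_imp_Bseq convergentI)
  then obtain B where B: "B > 0" "\<And>m. norm ((real m + 1) ^ n * q ^ m) \<le> B" by (auto elim: BseqE)
  have "(real m + 1) ^ n * a ^ m \<le> B * b ^ m" for m
  proof -
    have "(real m + 1) ^ n * q ^ m \<le> B" using B(2)[of m] q by simp
    then have "(real m + 1) ^ n * q ^ m * b ^ m \<le> B * b ^ m" using assms by (intro mult_right_mono) auto
    moreover have "q ^ m * b ^ m = a ^ m" using assms by (simp add: q_def power_divide)
    ultimately show ?thesis by (simp add: mult.assoc)
  qed
  then show ?thesis using B by blast
qed

lemma P_eq:
  assumes "1 \<le> j" "j \<le> n"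
  shows "P n j m = (\<lambda>x. coeff (R n m x) (j - 1))"
  unfolding P_def
proof (rule the_equality)
  show "poly_fun n (\<lambda>x. coeff (R n m x) (j - 1)) \<and>
    (\<forall>x. coeff (R n m x) (j - 1) * det (vandermonde n x) = det (vandermonde_repl n j m x))"
    using det_repl[OF assms] pf_R by auto
next
  fix f assume f: "poly_fun n f \<and> (\<forall>x. f x * det (vandermonde n x) = det (vandermonde_repl n j m x))"
  show "f = (\<lambda>x. coeff (R n m x) (j - 1))"
    by (rule pf_uniq[OF conjunct1[OF f] pf_R]) (use f det_repl[OF assms] in auto)
qed

theorem lemma4p3:
  fixes n :: nat and \<alpha> \<beta> :: real
  assumes "0 < \<alpha>" and "\<alpha> < \<beta>"
  shows "\<exists>c > 0. \<forall>m j (x :: nat \<Rightarrow> complex).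
           1 \<le> j \<and> j \<le> n \<and> (\<forall>r < n. cmod (x r) \<le> \<alpha>) \<longrightarrow>
           cmod (P n j m x) \<le> c * \<beta> ^ m"
proof -
  obtain B where B: "B > 0" "\<And>m. (real m + 1) ^ n * \<alpha> ^ m \<le> B * \<beta> ^ m"
    using poly_geom_bound[OF assms] by blast
  define K where "K = ((1 + \<alpha>) / \<alpha>) ^ n"
  have K: "K > 0" using assms by (simp add: K_def)
  define c where "c = real n * K * B + 1"
  have "0 \<le> real n * K * B" using K B by simp
  then have c: "c > 0" by (simp add: c_def)
  show ?thesis
  proof (intro exI[of _ c] conjI c allI impI)
    fix m j and x :: "nat \<Rightarrow> complex"
    assume h: "1 \<le> j \<and> j \<le> n \<and> (\<forall>r<n. cmod (x r) \<le> \<alpha>)"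
    have "cmod (P n j m x) = cmod (coeff (R n m x) (j - 1))" using h P_eq by simp
    also have "\<dots> \<le> real n * ((real m + 1) ^ n * \<alpha> ^ m * K)"
      unfolding K_def using R_bound assms h by blast
    also have "\<dots> = (real n * K) * ((real m + 1) ^ n * \<alpha> ^ m)" by (simp add: algebra_simps)
    also have "\<dots> \<le> (real n * K) * (B * \<beta> ^ m)"
      using B(2)[of m] K by (intro mult_left_mono) auto
    also have "\<dots> \<le> c * \<beta> ^ m"
      using assms by (simp add: c_def algebra_simps)
    finally show "cmod (P n j m x) \<le> c * \<beta> ^ m" .
  qed
qed

end
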